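(* Fix $l,r>0$, $0<\alpha<\beta<1$ and $\delta\in(-1,1)$, and let $A_M=l+\frac{\alpha}{1-\beta}r$. Then for every $Q_0\in\mathbb{R}$ the functions $A\mapsto G_1(Q_0,A,\delta)$ and $A\mapsto G_2(Q_0,A,\delta)$ are continuous on $(0,A_M)$. Moreover, on $(0,A_M)$ one has $\partial_A N>0$ and $\partial_A B<0$.
   Context: With $\delta=\frac{D_2-D_1}{D_2+D_1}$ for diffusion constants $D_1,D_2>0$, for $Q_0\in\mathbb{R}$ and $A>0$ define $B=B(A)=\frac{1-\beta}{\alpha}(l-A)+r$, $S_a=\sqrt{Q_0^2+A^2}$, $S_b=\sqrt{Q_0^2+B^2}$, $N=N(A)=A-l+S_a-S_b$, and $G_1(Q_0,A,\delta)=\delta\Big(\ln\frac{S_a+\delta Q_0}{S_b+\delta Q_0}+\ln\frac{l}{r}\Big)-(1+\delta)\ln\frac{A}{B}+\ln\frac{S_a-Q_0}{S_b-Q_0}$, $G_2(Q_0,A,\delta)=\delta Q_0\ln\frac{S_a+\delta Q_0}{S_b+\delta Q_0}-N$. (These arise from the zero-current Poisson–Nernst–Planck problem for two ion species with valences $\pm1$: $l,r$ are boundary concentrations, $Q_2=2Q_0$ is the permanent charge on $(a,b)\subset(0,1)$, $\alpha=H(a)/H(1)$, $\beta=H(b)/H(1)$ with $H(x)=\int_0^x ds/h(s)$, $h>0$ the cross-sectional area.) *)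

theory Defs
  imports "HOL-Analysis.Analysis"
begin

text \<open>Parameters: boundary concentrations l, r; alpha = H(a)/H(1), beta = H(b)/H(1).\<close>

definition BB :: "real \<Rightarrow> real \<Rightarrow> real \<Rightarrow> real \<Rightarrow> real \<Rightarrow> real" where
  "BB l r \<alpha> \<beta> A = (1 - \<beta>) / \<alpha> * (l - A) + r"

definition Sa :: "real \<Rightarrow> real \<Rightarrow> real" where
  "Sa Q0 A = sqrt (Q0^2 + A^2)"

definition Sb :: "real \<Rightarrow> real \<Rightarrow> real \<Rightarrow> real \<Rightarrow> real \<Rightarrow> real \<Rightarrow> real" where
  "Sb l r \<alpha> \<beta> Q0 A = sqrt (Q0^2 + (BB l r \<alpha> \<beta> A)^2)"

definition NN :: "real \<Rightarrow> real \<Rightarrow> real \<Rightarrow> real \<Rightarrow> real \<Rightarrow> real \<Rightarrow> real" where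
  "NN l r \<alpha> \<beta> Q0 A = A - l + Sa Q0 A - Sb l r \<alpha> \<beta> Q0 A"

definition G1 :: "real \<Rightarrow> real \<Rightarrow> real \<Rightarrow> real \<Rightarrow> real \<Rightarrow> real \<Rightarrow> real \<Rightarrow> real" where
  "G1 l r \<alpha> \<beta> Q0 A \<delta> =
     \<delta> * (ln ((Sa Q0 A + \<delta> * Q0) / (Sb l r \<alpha> \<beta> Q0 A + \<delta> * Q0)) + ln (l / r))
     - (1 + \<delta>) * ln (A / BB l r \<alpha> \<beta> A)
     + ln ((Sa Q0 A - Q0) / (Sb l r \<alpha> \<beta> Q0 A - Q0))"

definition G2 :: "real \<Rightarrow> real \<Rightarrow> real \<Rightarrow> real \<Rightarrow> real \<Rightarrow> real \<Rightarrow> real \<Rightarrow> real" where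
  "G2 l r \<alpha> \<beta> Q0 A \<delta> =
     \<delta> * Q0 * ln ((Sa Q0 A + \<delta> * Q0) / (Sb l r \<alpha> \<beta> Q0 A + \<delta> * Q0)) - NN l r \<alpha> \<beta> Q0 A"

end

theory Submission
  imports Defs
begin

lemma sqrt_gt_abs: "(y::real) \<noteq> 0 \<Longrightarrow> sqrt (q^2 + y^2) > \<bar>q\<bar>"
proof -
  assume "y \<noteq> 0"
  hence "q^2 < q^2 + y^2" by simp
  hence "sqrt (q^2) < sqrt (q^2 + y^2)" by (rule real_sqrt_less_mono)
  thus ?thesis by simp
qed

lemma abs_aux: "\<bar>q\<bar> < (s::real) \<Longrightarrow> -1 < d \<Longrightarrow> d < 1 \<Longrightarrow> s + d*q > 0 \<and> s - q > 0"
proof -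
  assume a: "\<bar>q\<bar> < s" "-1 < d" "d < 1"
  have "\<bar>d*q\<bar> \<le> \<bar>q\<bar>" using a by (simp add: abs_mult mult_left_le_one_le)
  thus ?thesis using a by auto
qed

lemma L1: "Q0^2 + A^2 > (0::real) \<Longrightarrow> ((\<lambda>x. sqrt (Q0^2 + x^2)) has_real_derivative (A / sqrt(Q0^2+A^2))) (at A)"
proof -
  assume p: "Q0^2 + A^2 > (0::real)"
  have g: "((\<lambda>x. Q0^2 + x^2) has_real_derivative (2*A)) (at A)"
    by (auto intro!: derivative_eq_intros)
  have "((\<lambda>x. sqrt (Q0^2 + x^2)) has_real_derivative (inverse (sqrt (Q0^2+A^2)) / 2 * (2*A))) (at A)"
    by (rule DERIV_chain2[OF DERIV_real_sqrt[OF p] g])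
  thus ?thesis by (rule DERIV_cong) (simp add: field_simps)
qed
lemma L2: "Q0^2 + (c*(l-A)+r)^2 > (0::real) \<Longrightarrow> ((\<lambda>x. sqrt (Q0^2 + (c*(l-x)+r)^2)) has_real_derivative (- c * (c*(l-A)+r) / sqrt(Q0^2+(c*(l-A)+r)^2))) (at A)"
proof -
  assume p: "Q0^2 + (c*(l-A)+r)^2 > (0::real)"
  have g: "((\<lambda>x. Q0^2 + (c*(l-x)+r)^2) has_real_derivative (2*(c*(l-A)+r)*(-c))) (at A)"
    by (auto intro!: derivative_eq_intros)
  have "((\<lambda>x. sqrt (Q0^2 + (c*(l-x)+r)^2)) has_real_derivative (inverse (sqrt (Q0^2+(c*(l-A)+r)^2)) / 2 * (2*(c*(l-A)+r)*(-c)))) (at A)"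
    by (rule DERIV_chain2[OF DERIV_real_sqrt[OF p] g])
  moreover have "inverse (s::real) / 2 * (2*b*(-c)) = -c*b/s" for s b by (simp add: divide_simps)
  ultimately show ?thesis by metis
qed

theorem lemma3p4:
  fixes l r \<alpha> \<beta> \<delta> :: real
  assumes "l > 0" and "r > 0" and "0 < \<alpha>" and "\<alpha> < \<beta>" and "\<beta> < 1"
    and "-1 < \<delta>" and "\<delta> < 1"
  defines "AM \<equiv> l + \<alpha> / (1 - \<beta>) * r"
  shows "(\<forall>Q0. continuous_on {0<..<AM} (\<lambda>A. G1 l r \<alpha> \<beta> Q0 A \<delta>)
              \<and> continuous_on {0<..<AM} (\<lambda>A. G2 l r \<alpha> \<beta> Q0 A \<delta>))
       \<and> (\<forall>Q0. \<forall>A\<in>{0<..<AM}. (\<lambda>x. NN l r \<alpha> \<beta> Q0 x) differentiable (at A)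
              \<and> deriv (\<lambda>x. NN l r \<alpha> \<beta> Q0 x) A > 0)
       \<and> (\<forall>A\<in>{0<..<AM}. BB l r \<alpha> \<beta> differentiable (at A)
              \<and> deriv (BB l r \<alpha> \<beta>) A < 0)"
proof -
  define c where "c = (1 - \<beta>) / \<alpha>"
  have c: "c > 0" using assms unfolding c_def by auto
  have Bpos: "BB l r \<alpha> \<beta> A > 0" if "A \<in> {0<..<AM}" for A
  proof -
    have "r / c = \<alpha> / (1 - \<beta>) * r" unfolding c_def using assms by (simp add: field_simps)
    hence "A < l + r / c" using that unfolding AM_def by simp
    hence "c * A < c * l + r" using c by (simp add: field_simps)
    thus ?thesis unfolding BB_def c_def[symmetric] by (simp add: algebra_simps)
  qed
  have BBeq: "BB l r \<alpha> \<beta> = (\<lambda>A. c * (l - A) + r)" unfolding BB_def c_def by auto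
  have dB: "(BB l r \<alpha> \<beta> has_real_derivative (- c)) (at A)" for A
    unfolding BBeq by (auto intro!: derivative_eq_intros)
  have facts: "Sa Q0 A + \<delta>*Q0 > 0 \<and> Sa Q0 A - Q0 > 0 \<and> Sb l r \<alpha> \<beta> Q0 A + \<delta>*Q0 > 0
      \<and> Sb l r \<alpha> \<beta> Q0 A - Q0 > 0 \<and> Sa Q0 A > 0 \<and> Sb l r \<alpha> \<beta> Q0 A > 0
      \<and> BB l r \<alpha> \<beta> A > 0 \<and> A > 0"
    if "A \<in> {0<..<AM}" for A Q0
  proof -
    have a: "Sa Q0 A > \<bar>Q0\<bar>" unfolding Sa_def using that by (intro sqrt_gt_abs) auto
    have b: "Sb l r \<alpha> \<beta> Q0 A > \<bar>Q0\<bar>" unfolding Sb_def using Bpos[OF that] by (intro sqrt_gt_abs) auto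
    show ?thesis using abs_aux[OF a assms(6,7)] abs_aux[OF b assms(6,7)] a b Bpos[OF that] that by auto
  qed
  have part1: "continuous_on {0<..<AM} (\<lambda>A. G1 l r \<alpha> \<beta> Q0 A \<delta>)
              \<and> continuous_on {0<..<AM} (\<lambda>A. G2 l r \<alpha> \<beta> Q0 A \<delta>)" for Q0
  proof -
    have cB: "continuous_on {0<..<AM} (BB l r \<alpha> \<beta>)" unfolding BBeq by (intro continuous_intros)
    have cSa: "continuous_on {0<..<AM} (Sa Q0)" unfolding Sa_def[abs_def] by (intro continuous_intros)
    have cSb: "continuous_on {0<..<AM} (Sb l r \<alpha> \<beta> Q0)" unfolding Sb_def[abs_def]
      by (intro continuous_intros cB)
    show ?thesis unfolding G1_def G2_def NN_def
      using facts[of _ Q0]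
      by (intro conjI continuous_intros cB cSa cSb; fastforce)
  qed
  have part2: "(\<lambda>x. NN l r \<alpha> \<beta> Q0 x) differentiable (at A)
              \<and> deriv (\<lambda>x. NN l r \<alpha> \<beta> Q0 x) A > 0" if A: "A \<in> {0<..<AM}" for A Q0
  proof -
    note f = facts[OF A, of Q0]
    let ?D = "1 + A / Sa Q0 A + c * BB l r \<alpha> \<beta> A / Sb l r \<alpha> \<beta> Q0 A"
    have d: "((\<lambda>x. NN l r \<alpha> \<beta> Q0 x) has_real_derivative ?D) (at A)"
    proof -
      have e: "(\<lambda>x. NN l r \<alpha> \<beta> Q0 x) = (\<lambda>x. x - l + sqrt (Q0^2 + x^2) - sqrt (Q0^2 + (c * (l - x) + r)^2))"
        unfolding NN_def Sa_def Sb_def BBeq by simp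
      have s1: "Q0^2 + A^2 > 0" using f by (simp add: add_nonneg_pos)
      have s2: "Q0^2 + (c * (l - A) + r)^2 > 0" using f unfolding BBeq by (simp add: add_nonneg_pos)
      have "((\<lambda>x. x - l + sqrt (Q0^2 + x^2) - sqrt (Q0^2 + (c * (l - x) + r)^2)) has_real_derivative
         (1 - 0 + A / sqrt(Q0^2+A^2) - (- c * (c*(l-A)+r) / sqrt(Q0^2+(c*(l-A)+r)^2)))) (at A)"
        by (intro DERIV_diff DERIV_add DERIV_ident DERIV_const L1 L2 s1 s2)
      then show ?thesis unfolding e
        by (rule DERIV_cong) (simp add: Sa_def Sb_def BBeq)
    qed
    have "?D > 0" using f c by (intro add_pos_pos) auto
    thus ?thesis using d DERIV_imp_deriv real_differentiable_def
      by (metis differentiable_def has_field_derivative_imp_has_derivative)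
  qed
  have part3: "BB l r \<alpha> \<beta> differentiable (at A) \<and> deriv (BB l r \<alpha> \<beta>) A < 0" for A
    using dB[of A] DERIV_imp_deriv c
    by (metis differentiable_def has_field_derivative_imp_has_derivative neg_less_0_iff_less)
  show ?thesis using part1 part2 part3 by blast
qed

end
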